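(* If $T\in\mathbf{A}$ is a compact operator, then $T=0$.
   Context: For $\lambda=(t,\omega)\in\mathbb{R}^d\times\mathbb{R}^d$, $U_{(t,\omega)}f(x)=e^{i\langle\omega,x\rangle}f(x-t)$ on $L^2(\mathbb{R}^d)$. $\mathcal{A}$ is the algebra of operators $\sum_{\lambda\in\mathbb{R}^{2d}}c_\lambda U_\lambda$ with $\sum_\lambda|c_\lambda|<\infty$, and $\mathbf{A}$ is its closure in operator norm in $B(L^2(\mathbb{R}^d))$ (a $C^*$-algebra). *)

theory Defs
  imports "HOL-Analysis.Analysis"
begin

text \<open>Concrete model of L^2(R^d) via representatives: functions on a Euclidean space
  (R^d, d = DIM('a)) to complex numbers, with Lebesgue measure.\<close>

definition L2 :: "('a::euclidean_space \<Rightarrow> complex) set" where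
  "L2 = {f. f \<in> borel_measurable lebesgue \<and> integrable lebesgue (\<lambda>x. (cmod (f x))^2)}"

definition L2norm :: "('a::euclidean_space \<Rightarrow> complex) \<Rightarrow> real" where
  "L2norm f = sqrt (\<integral>x. (cmod (f x))^2 \<partial>lebesgue)"

definition tf_shift :: "'a::euclidean_space \<times> 'a \<Rightarrow> ('a \<Rightarrow> complex) \<Rightarrow> 'a \<Rightarrow> complex" where
  "tf_shift l f x = exp (\<i> * of_real (snd l \<bullet> x)) * f (x - fst l)"

definition l1_op :: "('a::euclidean_space \<times> 'a \<Rightarrow> complex) \<Rightarrow> ('a \<Rightarrow> complex) \<Rightarrow> 'a \<Rightarrow> complex" where
  "l1_op c f x = (\<Sum>\<^sub>\<infinity>l. c l * tf_shift l f x)"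

text \<open>T lies in the operator-norm closure of the algebra of absolutely summable
  combinations of time-frequency shifts.\<close>
definition in_A :: "(('a::euclidean_space \<Rightarrow> complex) \<Rightarrow> ('a \<Rightarrow> complex)) \<Rightarrow> bool" where
  "in_A T \<longleftrightarrow> (\<forall>f\<in>L2. T f \<in> L2) \<and>
     (\<forall>e>0. \<exists>c. (\<lambda>l. norm (c l)) summable_on UNIV \<and>
        (\<forall>f\<in>L2. (\<lambda>x. T f x - l1_op c f x) \<in> L2 \<and>
                 L2norm (\<lambda>x. T f x - l1_op c f x) \<le> e * L2norm f))"

definition compact_op :: "(('a::euclidean_space \<Rightarrow> complex) \<Rightarrow> ('a \<Rightarrow> complex)) \<Rightarrow> bool" where
  "compact_op T \<longleftrightarrow> (\<forall>F::nat \<Rightarrow> ('a \<Rightarrow> complex). (\<forall>n. F n \<in> L2 \<and> L2norm (F n) \<le> 1) \<longrightarrow>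
     (\<exists>r g. strict_mono r \<and> g \<in> L2 \<and>
        (\<lambda>n. L2norm (\<lambda>x. T (F (r n)) x - g x)) \<longlonglongrightarrow> 0))"

end

theory Submission
  imports Defs
begin

definition N2 :: "('a::euclidean_space \<Rightarrow> complex) \<Rightarrow> ennreal" where
  "N2 g = (\<integral>\<^sup>+x. ennreal ((cmod (g x))\<^sup>2) \<partial>lebesgue)"

lemma L2_iff: "g \<in> L2 \<longleftrightarrow> g \<in> borel_measurable lebesgue \<and> N2 g < \<infinity>"
  unfolding L2_def N2_def
  by (auto simp: integrable_iff_bounded)

lemma N2_L2norm: assumes "g \<in> L2" shows "N2 g = ennreal ((L2norm g)\<^sup>2)"
proof -
  have i: "integrable lebesgue (\<lambda>x. (cmod (g x))\<^sup>2)" using assms by (simp add: L2_def)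
  have "N2 g = ennreal (\<integral>x. (cmod (g x))\<^sup>2 \<partial>lebesgue)"
    unfolding N2_def by (rule nn_integral_eq_integral[OF i]) auto
  moreover have "(\<integral>x. (cmod (g x))\<^sup>2 \<partial>lebesgue) \<ge> 0" by (rule integral_nonneg_AE) auto
  ultimately show ?thesis by (simp add: L2norm_def)
qed

lemma lebesgue_translate:
  fixes t :: "'a::euclidean_space"
  shows "distr lebesgue lebesgue (\<lambda>x. x + t) = lebesgue"
    and "(\<lambda>x. x + t) \<in> lebesgue \<rightarrow>\<^sub>M lebesgue"
proof -
  have eq: "(\<lambda>x. t + (\<Sum>j\<in>Basis. (1 * (x \<bullet> j)) *\<^sub>R j)) = (\<lambda>x::'a. x + t)"
    by (auto simp: euclidean_representation)
  show "(\<lambda>x. x + t) \<in> lebesgue \<rightarrow>\<^sub>M lebesgue"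
    using lebesgue_affine_measurable[of "\<lambda>_. 1" t] eq by simp
  have "lebesgue = density (distr lebesgue lebesgue (\<lambda>x::'a. x + t)) (\<lambda>_. 1)"
    using lebesgue_affine_euclidean[of "\<lambda>_. 1" t] eq by simp
  then show "distr lebesgue lebesgue (\<lambda>x. x + t) = lebesgue"
    by (simp add: density_1)
qed

lemma meas_translate:
  fixes t :: "'a::euclidean_space"
  assumes "g \<in> borel_measurable lebesgue"
  shows "(\<lambda>x. g (x + t)) \<in> borel_measurable lebesgue"
  using measurable_compose[OF lebesgue_translate(2)[of t] assms] by simp

lemma nn_translate:
  fixes t :: "'a::euclidean_space" and h :: "'a \<Rightarrow> ennreal"
  assumes "h \<in> borel_measurable lebesgue"
  shows "(\<integral>\<^sup>+x. h (x + t) \<partial>lebesgue) = (\<integral>\<^sup>+x. h x \<partial>lebesgue)"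
proof -
  have "(\<integral>\<^sup>+x. h x \<partial>lebesgue) = (\<integral>\<^sup>+x. h x \<partial>(distr lebesgue lebesgue (\<lambda>x. x + t)))"
    by (simp add: lebesgue_translate(1))
  also have "\<dots> = (\<integral>\<^sup>+x. h (x + t) \<partial>lebesgue)"
    by (rule nn_integral_distr[OF lebesgue_translate(2)]) (use assms in simp)
  finally show ?thesis by simp
qed

lemma N2_translate:
  assumes "g \<in> borel_measurable lebesgue"
  shows "N2 (\<lambda>x. g (x - t)) = N2 g"
proof -
  have m: "(\<lambda>x. ennreal ((cmod (g x))\<^sup>2)) \<in> borel_measurable lebesgue" using assms by measurable
  show ?thesis unfolding N2_def using nn_translate[OF m, of "-t"] by simp
qed

lemma meas_translate': "g \<in> borel_measurable lebesgue \<Longrightarrow> (\<lambda>x. g (x - t)) \<in> borel_measurable lebesgue"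
  using meas_translate[of g "-t"] by simp

lemma meas_tf_shift:
  assumes "g \<in> borel_measurable lebesgue"
  shows "tf_shift l g \<in> borel_measurable lebesgue"
proof -
  have "(\<lambda>x::'a. exp (\<i> * of_real (snd l \<bullet> x))) \<in> borel_measurable borel"
    by (intro borel_measurable_continuous_onI continuous_intros)
  then have "(\<lambda>x::'a. exp (\<i> * of_real (snd l \<bullet> x))) \<in> borel_measurable lborel" by simp
  then have "(\<lambda>x::'a. exp (\<i> * of_real (snd l \<bullet> x))) \<in> borel_measurable lebesgue"
    by (rule measurable_completion)
  then show ?thesis unfolding tf_shift_def[abs_def]
    using meas_translate'[OF assms, of "fst l"] by measurable
qed

lemma N2_tf_shift:
  assumes "g \<in> borel_measurable lebesgue"
  shows "N2 (tf_shift l g) = N2 g"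
proof -
  have "N2 (tf_shift l g) = N2 (\<lambda>x. g (x - fst l))"
    unfolding N2_def tf_shift_def by (simp add: norm_mult)
  then show ?thesis using N2_translate[OF assms] by simp
qed

lemma L2_tf_shift: "g \<in> L2 \<Longrightarrow> tf_shift l g \<in> L2"
  using L2_iff N2_tf_shift meas_tf_shift by metis

lemma sq_tri: "(cmod (a + b))\<^sup>2 \<le> 2 * (cmod a)\<^sup>2 + 2 * (cmod b)\<^sup>2"
proof -
  have "cmod (a + b) \<le> cmod a + cmod b" by (rule norm_triangle_ineq)
  then have "(cmod (a + b))\<^sup>2 \<le> (cmod a + cmod b)\<^sup>2" by (simp add: power_mono)
  also have "\<dots> \<le> 2 * (cmod a)\<^sup>2 + 2 * (cmod b)\<^sup>2"
    by (smt (verit) sum_squares_bound power2_sum)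
  finally show ?thesis .
qed

lemma N2_add:
  assumes "a \<in> borel_measurable lebesgue" "b \<in> borel_measurable lebesgue"
  shows "N2 (\<lambda>x. a x + b x) \<le> 2 * N2 a + 2 * N2 b"
proof -
  have "N2 (\<lambda>x. a x + b x) \<le> (\<integral>\<^sup>+x. (2 * ennreal ((cmod (a x))\<^sup>2) + 2 * ennreal ((cmod (b x))\<^sup>2)) \<partial>lebesgue)"
    unfolding N2_def
  proof (rule nn_integral_mono)
    fix x
    have "(cmod (a x + b x))\<^sup>2 \<le> 2 * (cmod (a x))\<^sup>2 + 2 * (cmod (b x))\<^sup>2" by (rule sq_tri)
    then have "ennreal ((cmod (a x + b x))\<^sup>2) \<le> ennreal (2 * (cmod (a x))\<^sup>2 + 2 * (cmod (b x))\<^sup>2)"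
      by (rule ennreal_leI)
    also have "\<dots> = 2 * ennreal ((cmod (a x))\<^sup>2) + 2 * ennreal ((cmod (b x))\<^sup>2)"
      by (simp add: ennreal_plus ennreal_mult)
    finally show "ennreal ((cmod (a x + b x))\<^sup>2) \<le> 2 * ennreal ((cmod (a x))\<^sup>2) + 2 * ennreal ((cmod (b x))\<^sup>2)" .
  qed
  also have "\<dots> = 2 * N2 a + 2 * N2 b"
    unfolding N2_def using assms
    by (subst nn_integral_add) (auto simp: nn_integral_cmult)
  finally show ?thesis .
qed

lemma N2_diff:
  assumes "a \<in> borel_measurable lebesgue" "b \<in> borel_measurable lebesgue"
  shows "N2 (\<lambda>x. a x - b x) \<le> 2 * N2 a + 2 * N2 b"
proof -
  have "N2 (\<lambda>x. a x + (- b x)) \<le> 2 * N2 a + 2 * N2 (\<lambda>x. - b x)"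
    using assms by (intro N2_add) auto
  moreover have "N2 (\<lambda>x. - b x) = N2 b" unfolding N2_def by simp
  ultimately show ?thesis by simp
qed

lemma L2_add: "a \<in> L2 \<Longrightarrow> b \<in> L2 \<Longrightarrow> (\<lambda>x. a x + b x) \<in> L2"
  using N2_add[of a b] by (auto simp: L2_iff ennreal_mult_less_top order_le_less_trans)

lemma L2_diff: "a \<in> L2 \<Longrightarrow> b \<in> L2 \<Longrightarrow> (\<lambda>x. a x - b x) \<in> L2"
  using N2_diff[of a b] by (auto simp: L2_iff ennreal_mult_less_top order_le_less_trans)

lemma N2_scale: "g \<in> borel_measurable lebesgue \<Longrightarrow> N2 (\<lambda>x. a * g x) = ennreal ((cmod a)\<^sup>2) * N2 g"
  unfolding N2_def
  by (subst nn_integral_cmult[symmetric]) (auto simp: norm_mult power_mult_distrib ennreal_mult')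

lemma CS_fin:
  fixes w \<beta> :: "nat \<Rightarrow> real"
  assumes "\<And>n. w n \<ge> 0"
  shows "(\<Sum>n\<in>A. w n * \<beta> n)\<^sup>2 \<le> (\<Sum>n\<in>A. w n) * (\<Sum>n\<in>A. w n * (\<beta> n)\<^sup>2)"
proof -
  have "(\<Sum>n\<in>A. sqrt (w n) * (sqrt (w n) * \<beta> n))\<^sup>2 \<le> (\<Sum>n\<in>A. (sqrt (w n))\<^sup>2) * (\<Sum>n\<in>A. (sqrt (w n) * \<beta> n)\<^sup>2)"
    by (rule Cauchy_Schwarz_ineq_sum)
  moreover have "\<And>n. sqrt (w n) * (sqrt (w n) * \<beta> n) = w n * \<beta> n"
    using assms by (simp add: mult.assoc[symmetric])
  moreover have "\<And>n. (sqrt (w n))\<^sup>2 = w n" using assms by simp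
  moreover have "\<And>n. (sqrt (w n) * \<beta> n)\<^sup>2 = w n * (\<beta> n)\<^sup>2" using assms by (simp add: power_mult_distrib)
  ultimately show ?thesis by simp
qed

lemma CS_suminf:
  fixes w \<beta> :: "nat \<Rightarrow> real"
  assumes w0: "\<And>n. w n \<ge> 0" and ws: "summable w" and b0: "\<And>n. \<beta> n \<ge> 0"
  shows "(\<Sum>n. ennreal (w n * \<beta> n))\<^sup>2 \<le> ennreal (suminf w) * (\<Sum>n. ennreal (w n * (\<beta> n)\<^sup>2))"
proof -
  define P where "P k = (\<Sum>i<k. ennreal (w i * \<beta> i))" for k
  define C where "C = ennreal (suminf w) * (\<Sum>n. ennreal (w n * (\<beta> n)\<^sup>2))"
  have Pmono: "P n \<le> P m" if "n \<le> m" for n m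
    unfolding P_def using that by (intro sum_mono2) auto
  have Pk: "P k * P k \<le> C" for k
  proof -
    have "P k = ennreal (\<Sum>i<k. w i * \<beta> i)" unfolding P_def
      using w0 b0 by (subst sum_ennreal) auto
    then have "P k * P k = ennreal ((\<Sum>i<k. w i * \<beta> i)\<^sup>2)"
      using w0 b0 by (simp add: ennreal_mult'[symmetric] power2_eq_square sum_nonneg)
    also have "\<dots> \<le> ennreal ((\<Sum>i<k. w i) * (\<Sum>i<k. w i * (\<beta> i)\<^sup>2))"
      by (rule ennreal_leI, rule CS_fin[OF w0])
    also have "\<dots> = ennreal (\<Sum>i<k. w i) * ennreal (\<Sum>i<k. w i * (\<beta> i)\<^sup>2)"
      using w0 b0 by (intro ennreal_mult) (auto intro!: sum_nonneg)
    also have "\<dots> = ennreal (\<Sum>i<k. w i) * (\<Sum>i<k. ennreal (w i * (\<beta> i)\<^sup>2))"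
      using w0 b0 by (subst sum_ennreal) auto
    also have "\<dots> \<le> C" unfolding C_def
    proof (rule mult_mono)
      show "ennreal (\<Sum>i<k. w i) \<le> ennreal (suminf w)"
        by (rule ennreal_leI, rule sum_le_suminf[OF ws]) (auto simp: w0)
      show "(\<Sum>i<k. ennreal (w i * (\<beta> i)\<^sup>2)) \<le> (\<Sum>n. ennreal (w n * (\<beta> n)\<^sup>2))"
        by (rule sum_le_suminf) (auto intro: summableI)
    qed auto
    finally show ?thesis .
  qed
  have "(\<Sum>n. ennreal (w n * \<beta> n)) = (SUP k. P k)" unfolding P_def by (rule suminf_eq_SUP)
  then have "(\<Sum>n. ennreal (w n * \<beta> n))\<^sup>2 = (SUP n. P n) * (SUP m. P m)" by (simp add: power2_eq_square)
  also have "\<dots> = (SUP m. SUP n. P n * P m)"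
    by (simp add: SUP_mult_left_ennreal SUP_mult_right_ennreal)
  also have "\<dots> \<le> C"
  proof (intro SUP_least)
    fix m n
    have "P n * P m \<le> P (max n m) * P (max n m)" by (intro mult_mono Pmono) auto
    then show "P n * P m \<le> C" using Pk order_trans by blast
  qed
  finally show ?thesis unfolding C_def .
qed

definition Maj :: "(nat \<Rightarrow> real) \<Rightarrow> (nat \<Rightarrow> 'a \<times> 'a) \<Rightarrow> ('a::euclidean_space \<Rightarrow> complex) \<Rightarrow> 'a \<Rightarrow> ennreal" where
  "Maj w g h x = (\<Sum>n. ennreal (w n * cmod (h (x - fst (g n)))))"

lemma Maj_meas:
  assumes "h \<in> borel_measurable lebesgue"
  shows "Maj w g h \<in> borel_measurable lebesgue"
proof -
  have "\<And>n. (\<lambda>x. h (x - fst (g n))) \<in> borel_measurable lebesgue"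
    by (rule meas_translate'[OF assms])
  then have "\<And>n. (\<lambda>x. ennreal (w n * cmod (h (x - fst (g n))))) \<in> borel_measurable lebesgue"
    by measurable
  then show ?thesis unfolding Maj_def[abs_def] by measurable
qed

lemma Maj_bound:
  assumes w0: "\<And>n. w n \<ge> 0" and ws: "summable w" and hm: "h \<in> borel_measurable lebesgue"
  shows "(\<integral>\<^sup>+x. (Maj w g h x)\<^sup>2 \<partial>lebesgue) \<le> ennreal ((suminf w)\<^sup>2) * N2 h"
proof -
  have mt: "\<And>n. (\<lambda>x. ennreal (w n * (cmod (h (x - fst (g n))))\<^sup>2)) \<in> borel_measurable lebesgue"
  proof -
    fix n
    have "(\<lambda>x. h (x - fst (g n))) \<in> borel_measurable lebesgue"
      by (rule meas_translate'[OF hm])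
    then show "(\<lambda>x. ennreal (w n * (cmod (h (x - fst (g n))))\<^sup>2)) \<in> borel_measurable lebesgue"
      by measurable
  qed
  have "(\<integral>\<^sup>+x. (Maj w g h x)\<^sup>2 \<partial>lebesgue) \<le>
     (\<integral>\<^sup>+x. ennreal (suminf w) * (\<Sum>n. ennreal (w n * (cmod (h (x - fst (g n))))\<^sup>2)) \<partial>lebesgue)"
    unfolding Maj_def by (rule nn_integral_mono, rule CS_suminf[OF w0 ws]) auto
  also have "\<dots> = ennreal (suminf w) * (\<integral>\<^sup>+x. (\<Sum>n. ennreal (w n * (cmod (h (x - fst (g n))))\<^sup>2)) \<partial>lebesgue)"
    by (rule nn_integral_cmult, rule borel_measurable_suminf_order, rule mt)
  also have "(\<integral>\<^sup>+x. (\<Sum>n. ennreal (w n * (cmod (h (x - fst (g n))))\<^sup>2)) \<partial>lebesgue)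
      = (\<Sum>n. (\<integral>\<^sup>+x. ennreal (w n * (cmod (h (x - fst (g n))))\<^sup>2) \<partial>lebesgue))"
    by (rule nn_integral_suminf[OF mt])
  also have "\<dots> = (\<Sum>n. ennreal (w n) * N2 h)"
  proof (rule suminf_cong)
    fix n
    have "(\<integral>\<^sup>+x. ennreal (w n * (cmod (h (x - fst (g n))))\<^sup>2) \<partial>lebesgue)
        = (\<integral>\<^sup>+x. ennreal (w n) * ennreal ((cmod (h (x - fst (g n))))\<^sup>2) \<partial>lebesgue)"
      using w0 by (simp add: ennreal_mult)
    also have "\<dots> = ennreal (w n) * N2 (\<lambda>x. h (x - fst (g n)))"
      unfolding N2_def using meas_translate'[OF hm, of "fst (g n)"]
      by (intro nn_integral_cmult) measurable
    also have "\<dots> = ennreal (w n) * N2 h" using N2_translate[OF hm] by simp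
    finally show "(\<integral>\<^sup>+x. ennreal (w n * (cmod (h (x - fst (g n))))\<^sup>2) \<partial>lebesgue) = ennreal (w n) * N2 h" .
  qed
  also have "\<dots> = ennreal (suminf w) * N2 h"
    using suminf_ennreal2[OF w0 ws] by simp
  finally show ?thesis
    using suminf_nonneg[OF ws w0] by (simp add: power2_eq_square ennreal_mult mult.assoc)
qed

lemma nat_enum_sum:
  fixes \<phi> :: "'l \<Rightarrow> complex" and g :: "nat \<Rightarrow> 'l"
  assumes inj: "inj g" and z: "\<And>l. l \<notin> range g \<Longrightarrow> \<phi> l = 0"
    and fin: "(\<Sum>n. ennreal (cmod (\<phi> (g n)))) \<noteq> \<infinity>"
  shows "\<phi> summable_on UNIV" and "ennreal (cmod (infsum \<phi> UNIV)) \<le> (\<Sum>n. ennreal (cmod (\<phi> (g n))))"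
proof -
  have s: "summable (\<lambda>n. cmod (\<phi> (g n)))"
    by (rule summable_suminf_not_top) (use fin in auto)
  have "(\<lambda>n. cmod (\<phi> (g n))) summable_on UNIV"
    by (rule norm_summable_imp_summable_on) (use s in simp)
  then have ab: "(\<lambda>n. norm ((\<phi> \<circ> g) n)) summable_on UNIV" by (simp add: o_def)
  then have sg: "(\<phi> \<circ> g) summable_on UNIV"
    using summable_on_iff_abs_summable_on_complex ab by blast
  then have sr: "\<phi> summable_on range g"
    using summable_on_reindex[of g UNIV \<phi>] inj by simp
  show su: "\<phi> summable_on UNIV"
    using summable_on_cong_neutral[of UNIV "range g" \<phi> \<phi>] z sr by auto
  have eq: "infsum \<phi> UNIV = infsum (\<phi> \<circ> g) UNIV"
    using infsum_cong_neutral[of UNIV "range g" \<phi> \<phi>] z infsum_reindex[of g UNIV \<phi>] inj by auto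
  have "cmod (infsum (\<phi> \<circ> g) UNIV) \<le> infsum (\<lambda>n. cmod ((\<phi> \<circ> g) n)) UNIV"
    by (rule norm_infsum_bound) (use ab in simp)
  also have "infsum (\<lambda>n. cmod ((\<phi> \<circ> g) n)) UNIV = (\<Sum>n. cmod (\<phi> (g n)))"
  proof -
    have "((\<lambda>n. cmod ((\<phi> \<circ> g) n)) has_sum infsum (\<lambda>n. cmod ((\<phi> \<circ> g) n)) UNIV) UNIV"
      using ab by (rule has_sum_infsum)
    then have "(\<lambda>n. cmod ((\<phi> \<circ> g) n)) sums infsum (\<lambda>n. cmod ((\<phi> \<circ> g) n)) UNIV"
      by (rule has_sum_imp_sums)
    then show ?thesis by (simp add: sums_iff o_def)
  qed
  finally have "ennreal (cmod (infsum \<phi> UNIV)) \<le> ennreal (\<Sum>n. cmod (\<phi> (g n)))"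
    using eq by (intro ennreal_leI) simp
  also have "\<dots> = (\<Sum>n. ennreal (cmod (\<phi> (g n))))"
    by (rule suminf_ennreal2[symmetric]) (use s in auto)
  finally show "ennreal (cmod (infsum \<phi> UNIV)) \<le> (\<Sum>n. ennreal (cmod (\<phi> (g n))))" .
qed

lemma norm_tf_shift: "cmod (tf_shift l f y) = cmod (f (y - fst l))"
  unfolding tf_shift_def by (simp add: norm_mult)

lemma G_bound:
  fixes c p :: "'a::euclidean_space \<times> 'a \<Rightarrow> complex" and g :: "nat \<Rightarrow> 'a \<times> 'a"
  assumes inj: "inj g" and z: "\<And>l. l \<notin> range g \<Longrightarrow> c l = 0"
    and p1: "\<And>l. cmod (p l) = 1"
    and fin: "Maj (\<lambda>n. cmod (c (g n))) g f y \<noteq> \<infinity>"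
  shows "ennreal (cmod (l1_op (\<lambda>l. c l * p l) f y - l1_op c f y))
     \<le> Maj (\<lambda>n. cmod (c (g n)) * cmod (p (g n) - 1)) g f y"
proof -
  define \<phi>1 where "\<phi>1 l = c l * p l * tf_shift l f y" for l
  define \<phi>0 where "\<phi>0 l = c l * tf_shift l f y" for l
  define \<phi>2 where "\<phi>2 l = c l * (p l - 1) * tf_shift l f y" for l
  have n1: "(\<Sum>n. ennreal (cmod (\<phi>1 (g n)))) = Maj (\<lambda>n. cmod (c (g n))) g f y"
    unfolding \<phi>1_def Maj_def by (intro suminf_cong) (simp only: norm_mult p1 norm_tf_shift mult_1_right)
  have n0: "(\<Sum>n. ennreal (cmod (\<phi>0 (g n)))) = Maj (\<lambda>n. cmod (c (g n))) g f y"
    unfolding \<phi>0_def Maj_def by (intro suminf_cong) (simp only: norm_mult norm_tf_shift)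
  have n2: "(\<Sum>n. ennreal (cmod (\<phi>2 (g n)))) = Maj (\<lambda>n. cmod (c (g n)) * cmod (p (g n) - 1)) g f y"
    unfolding \<phi>2_def Maj_def by (intro suminf_cong) (simp only: norm_mult norm_tf_shift mult.assoc)
  have le2: "(\<Sum>n. ennreal (cmod (\<phi>2 (g n)))) \<le> 2 * (\<Sum>n. ennreal (cmod (\<phi>0 (g n))))"
  proof -
    have b: "ennreal (cmod (\<phi>2 (g n))) \<le> 2 * ennreal (cmod (\<phi>0 (g n)))" for n
    proof -
      have "cmod (p (g n) - 1) \<le> 2"
        using norm_triangle_ineq4[of "p (g n)" 1] p1[of "g n"] by simp
      then have "cmod (c (g n)) * cmod (p (g n) - 1) \<le> cmod (c (g n)) * 2"
        by (intro mult_left_mono) auto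
      then have "cmod (c (g n)) * cmod (p (g n) - 1) * cmod (tf_shift (g n) f y) \<le> cmod (c (g n)) * 2 * cmod (tf_shift (g n) f y)"
        by (intro mult_right_mono) auto
      then have h2: "cmod (\<phi>2 (g n)) \<le> 2 * cmod (\<phi>0 (g n))"
        unfolding \<phi>2_def \<phi>0_def by (simp only: norm_mult mult_ac)
      have "ennreal (cmod (\<phi>2 (g n))) \<le> ennreal (2 * cmod (\<phi>0 (g n)))"
        by (rule ennreal_leI[OF h2])
      also have "\<dots> = 2 * ennreal (cmod (\<phi>0 (g n)))"
        by (metis ennreal_mult ennreal_numeral norm_ge_zero zero_le_numeral)
      finally show ?thesis .
    qed
    have "(\<Sum>n. ennreal (cmod (\<phi>2 (g n)))) \<le> (\<Sum>n. 2 * ennreal (cmod (\<phi>0 (g n))))"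
      by (rule suminf_le[OF b summableI summableI])
    also have "\<dots> = 2 * (\<Sum>n. ennreal (cmod (\<phi>0 (g n))))"
      by (rule ennreal_suminf_cmult)
    finally show ?thesis .
  qed
  have f0: "(\<Sum>n. ennreal (cmod (\<phi>0 (g n)))) \<noteq> \<infinity>" using n0 fin by metis
  have f1: "(\<Sum>n. ennreal (cmod (\<phi>1 (g n)))) \<noteq> \<infinity>" using n1 fin by metis
  have "(\<Sum>n. ennreal (cmod (\<phi>0 (g n)))) < top" using f0 by (metis infinity_ennreal_def less_top)
  then have "\<exists>r\<ge>0. (\<Sum>n. ennreal (cmod (\<phi>0 (g n)))) = ennreal r" by (simp only: less_top_ennreal)
  then obtain r where r: "(\<Sum>n. ennreal (cmod (\<phi>0 (g n)))) = ennreal r" "r \<ge> 0" by blast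
  have e2: "ennreal (2 * r) = ennreal 2 * ennreal r" by (rule ennreal_mult) (use r(2) in auto)
  have le2': "(\<Sum>n. ennreal (cmod (\<phi>2 (g n)))) \<le> ennreal (2 * r)"
    using le2 unfolding r(1) e2 by simp
  have f2: "(\<Sum>n. ennreal (cmod (\<phi>2 (g n)))) \<noteq> \<infinity>"
  proof
    assume "(\<Sum>n. ennreal (cmod (\<phi>2 (g n)))) = \<infinity>"
    then have "ennreal (2 * r) = top" using le2' by (simp add: top_unique)
    then show False by simp
  qed
  have s0: "\<phi>0 summable_on UNIV" by (rule nat_enum_sum(1)[OF inj _ f0]) (auto simp: \<phi>0_def z)
  have s1: "\<phi>1 summable_on UNIV" by (rule nat_enum_sum(1)[OF inj _ f1]) (auto simp: \<phi>1_def z)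
  have "l1_op (\<lambda>l. c l * p l) f y - l1_op c f y = infsum \<phi>1 UNIV - infsum \<phi>0 UNIV"
    unfolding l1_op_def \<phi>1_def \<phi>0_def by simp
  also have "\<dots> = infsum (\<lambda>l. \<phi>1 l + - \<phi>0 l) UNIV"
    using infsum_add[OF s1 summable_on_uminus[THEN iffD2, OF s0]] infsum_uminus[of \<phi>0 UNIV] by simp
  also have "\<dots> = infsum \<phi>2 UNIV"
    by (rule infsum_cong) (simp add: \<phi>1_def \<phi>0_def \<phi>2_def algebra_simps)
  finally have eq: "l1_op (\<lambda>l. c l * p l) f y - l1_op c f y = infsum \<phi>2 UNIV" .
  show ?thesis unfolding eq n2[symmetric]
    by (rule nat_enum_sum(2)[OF inj _ f2]) (auto simp: \<phi>2_def z)
qed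

lemma cis_minus_1: "cmod (cis y - 1) \<le> \<bar>y\<bar>"
proof -
  have "(cmod (cis y - 1))\<^sup>2 = (cos y - 1)\<^sup>2 + (sin y)\<^sup>2" by (simp add: cmod_power2)
  also have "\<dots> = 2 - 2 * cos y" using sin_cos_squared_add[of y] by (simp add: power2_diff)
  also have "\<dots> = 4 * (sin (y/2))\<^sup>2" using cos_double_sin[of "y/2"] by simp
  also have "\<dots> \<le> 4 * (y/2)\<^sup>2"
  proof -
    have "\<bar>sin (y/2)\<bar> \<le> \<bar>y/2\<bar>" by (rule abs_sin_x_le_abs_x)
    then have "(sin (y/2))\<^sup>2 \<le> (y/2)\<^sup>2" by (metis abs_le_square_iff)
    then show ?thesis by simp
  qed
  also have "\<dots> = \<bar>y\<bar>\<^sup>2" by (simp add: power2_eq_square)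
  finally show ?thesis by (rule power2_le_imp_le) simp
qed

lemma phases:
  fixes \<theta> :: "nat \<Rightarrow> 'a::euclidean_space"
  assumes "\<delta> > 0"
  obtains \<nu> :: 'a where "norm \<nu> \<ge> L" "\<And>i. i < N \<Longrightarrow> cmod (exp (\<i> * of_real (\<theta> i \<bullet> \<nu>)) - 1) \<le> \<delta>"
proof -
  obtain u :: 'a where u: "u \<in> Basis" using nonempty_Basis by blast
  have nu: "norm u = 1" using u by simp
  define M where "M = max L 1"
  have M: "M \<ge> L" "M \<ge> 1" unfolding M_def by auto
  obtain K :: nat where K: "2 * pi / \<delta> < real K" using reals_Archimedean2 by blast
  have Kpos: "K > 0" using K assms pi_gt_zero
    by (metis divide_pos_pos gr0I less_trans mult_pos_pos of_nat_0 zero_less_numeral less_irrefl)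
  have Kd: "2 * pi / real K \<le> \<delta>" using K assms Kpos by (simp add: field_simps)
  define th where "th i = M * (\<theta> i \<bullet> u) / (2 * pi)" for i
  obtain q p where q: "0 < q" and qp: "\<And>i. i < N \<Longrightarrow> \<bar>of_int q * th i - of_int (p i)\<bar> < 1 / K"
    using Dirichlet_approx_simult[OF Kpos, where \<theta>=th and n=N] by blast
  define \<nu> where "\<nu> = (real_of_int q * M) *\<^sub>R u"
  show ?thesis
  proof
    have "norm \<nu> = real_of_int q * M" unfolding \<nu>_def using q M nu by simp
    also have "\<dots> \<ge> M" using q M by (simp add: mult_le_cancel_right1)
    finally show "norm \<nu> \<ge> L" using M by linarith
  next
    fix i assume i: "i < N"
    have eq: "\<theta> i \<bullet> \<nu> = 2 * pi * (of_int q * th i - of_int (p i)) + 2 * pi * of_int (p i)"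
      unfolding \<nu>_def th_def by (simp add: field_simps inner_commute)
    have "exp (\<i> * of_real (\<theta> i \<bullet> \<nu>)) = cis (\<theta> i \<bullet> \<nu>)" by (simp add: cis_conv_exp)
    also have "\<dots> = cis (2 * pi * (of_int q * th i - of_int (p i))) * cis (2 * pi * of_int (p i))"
      unfolding eq by (rule cis_mult[symmetric])
    also have "cis (2 * pi * of_int (p i)) = 1" by (simp add: cis_multiple_2pi)
    finally have "cmod (exp (\<i> * of_real (\<theta> i \<bullet> \<nu>)) - 1) \<le> \<bar>2 * pi * (of_int q * th i - of_int (p i))\<bar>"
      using cis_minus_1 by simp
    also have "\<dots> = 2 * pi * \<bar>of_int q * th i - of_int (p i)\<bar>" by (simp add: abs_mult)
    also have "\<dots> \<le> 2 * pi * (1 / K)" using qp[OF i] by (intro mult_left_mono) auto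
    also have "\<dots> \<le> \<delta>" using Kd by simp
    finally show "cmod (exp (\<i> * of_real (\<theta> i \<bullet> \<nu>)) - 1) \<le> \<delta>" .
  qed
qed

lemma meas_norm_pred:
  fixes r :: real
  shows "{x::'a::euclidean_space. r \<le> norm x} \<in> sets lebesgue"
proof -
  have "{x::'a. r \<le> norm x} \<in> sets borel" by (intro closed_Collect_le borel_closed continuous_intros)
  then show ?thesis by simp
qed

lemma meas_cut:
  fixes r :: real and h :: "'a::euclidean_space \<Rightarrow> 'b::{real_normed_vector, second_countable_topology}"
  assumes "h \<in> borel_measurable lebesgue"
  shows "(\<lambda>x::'a::euclidean_space. if r \<le> norm x then h x else 0) \<in> borel_measurable lebesgue"
    and "(\<lambda>x::'a::euclidean_space. if r \<le> norm x then 0 else h x) \<in> borel_measurable lebesgue"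
proof -
  have "(\<lambda>x::'a. if r \<le> norm x then h x else 0) = (\<lambda>x. indicator {x. r \<le> norm x} x *\<^sub>R h x)"
    by (auto simp: indicator_def)
  then show "(\<lambda>x::'a::euclidean_space. if r \<le> norm x then h x else 0) \<in> borel_measurable lebesgue"
    using borel_measurable_scaleR[OF borel_measurable_indicator[OF meas_norm_pred[of r]] assms] by simp
  have "(\<lambda>x::'a. if r \<le> norm x then 0 else h x) = (\<lambda>x. indicator (- {x. r \<le> norm x}) x *\<^sub>R h x)"
    by (auto simp: indicator_def)
  moreover have "- {x::'a. r \<le> norm x} \<in> sets lebesgue"
  proof -
    have "- {x::'a. r \<le> norm x} = {x. norm x < r}" by auto
    moreover have "{x::'a. norm x < r} \<in> sets borel" by (intro borel_open open_Collect_less continuous_intros)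
    ultimately show ?thesis by simp
  qed
  ultimately show "(\<lambda>x::'a::euclidean_space. if r \<le> norm x then 0 else h x) \<in> borel_measurable lebesgue"
    using borel_measurable_scaleR[OF borel_measurable_indicator assms] by metis
qed

lemma tail_small:
  fixes h :: "'a::euclidean_space \<Rightarrow> complex"
  assumes h: "h \<in> L2" and e: "\<epsilon> > 0"
  shows "\<exists>n::nat. N2 (\<lambda>x. if real n \<le> norm x then h x else 0) \<le> ennreal \<epsilon>"
proof -
  have hm: "h \<in> borel_measurable lebesgue" and hi: "integrable lebesgue (\<lambda>x. (cmod (h x))\<^sup>2)"
    using h by (auto simp: L2_def)
  define sf where "sf n x = (if real n \<le> norm x then (cmod (h x))\<^sup>2 else 0)" for n :: nat and x :: 'a
  have sfm: "sf n \<in> borel_measurable lebesgue" for n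
  proof -
    have "(\<lambda>x. (cmod (h x))\<^sup>2) \<in> borel_measurable lebesgue" using hm by measurable
    then show ?thesis unfolding sf_def[abs_def] using meas_cut(1) by blast
  qed
  have lim: "AE x in lebesgue. (\<lambda>n. sf n x) \<longlonglongrightarrow> 0"
  proof (rule AE_I2)
    fix x :: 'a
    have "eventually (\<lambda>n. sf n x = 0) sequentially"
    proof (rule eventually_sequentiallyI[of "nat \<lceil>norm x\<rceil> + 1"])
      fix n assume "nat \<lceil>norm x\<rceil> + 1 \<le> n"
      then have "norm x < real n" by linarith
      then show "sf n x = 0" unfolding sf_def by simp
    qed
    then show "(\<lambda>n. sf n x) \<longlonglongrightarrow> 0" by (rule tendsto_eventually)
  qed
  have bound: "AE x in lebesgue. norm (sf n x) \<le> (cmod (h x))\<^sup>2" for n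
    by (rule AE_I2) (simp add: sf_def)
  have t: "(\<lambda>n. integral\<^sup>L lebesgue (sf n)) \<longlonglongrightarrow> integral\<^sup>L lebesgue (\<lambda>x. 0::real)"
    using integral_dominated_convergence[of "\<lambda>x. 0::real" lebesgue sf "\<lambda>x. (cmod (h x))\<^sup>2"] sfm hi lim bound by simp
  have si: "integrable lebesgue (sf n)" for n
    using integrable_dominated_convergence2[of "\<lambda>x. 0::real" lebesgue sf "\<lambda>x. (cmod (h x))\<^sup>2"] sfm hi lim bound by simp
  from t have "eventually (\<lambda>n. integral\<^sup>L lebesgue (sf n) < \<epsilon>) sequentially"
    using e by (simp add: order_tendsto_iff)
  then obtain n where n: "integral\<^sup>L lebesgue (sf n) < \<epsilon>" by (auto simp: eventually_sequentially)
  have "N2 (\<lambda>x. if real n \<le> norm x then h x else 0) = (\<integral>\<^sup>+x. ennreal (sf n x) \<partial>lebesgue)"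
    unfolding N2_def sf_def by (intro nn_integral_cong) auto
  also have "\<dots> = ennreal (integral\<^sup>L lebesgue (sf n))"
    by (rule nn_integral_eq_integral[OF si]) (simp add: sf_def)
  also have "\<dots> \<le> ennreal \<epsilon>" using n by (intro ennreal_leI) simp
  finally show ?thesis by blast
qed

lemma far_shift:
  fixes h :: "'a::euclidean_space \<Rightarrow> complex"
  assumes h: "h \<in> L2" and e: "\<epsilon> > 0"
  obtains R :: real where "\<And>s. norm s > 2 * R \<Longrightarrow> N2 h \<le> 2 * N2 (\<lambda>x. h (x - s) - h x) + ennreal \<epsilon>"
proof -
  have hm: "h \<in> borel_measurable lebesgue" using h by (simp add: L2_def)
  obtain n :: nat where n: "N2 (\<lambda>x. if real n \<le> norm x then h x else 0) \<le> ennreal (\<epsilon> / 10)"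
    using tail_small[OF h, of "\<epsilon>/10"] e by auto
  define R where "R = real n"
  define b where "b x = (if R \<le> norm x then h x else 0)" for x
  define a where "a x = (if R \<le> norm x then 0 else h x)" for x
  have bm: "b \<in> borel_measurable lebesgue" unfolding b_def[abs_def] by (rule meas_cut(1)[OF hm])
  have am: "a \<in> borel_measurable lebesgue" unfolding a_def[abs_def] by (rule meas_cut(2)[OF hm])
  have Nb: "N2 b \<le> ennreal (\<epsilon> / 10)" using n unfolding b_def R_def .
  have hab: "h = (\<lambda>x. a x + b x)" unfolding a_def b_def by auto
  have Nh: "N2 h \<le> 2 * N2 a + 2 * N2 b" using N2_add[OF am bm] hab by simp
  show ?thesis
  proof (rule that)
    fix s :: 'a assume s: "norm s > 2 * R"
    have disj: "a (x - s) = 0 \<or> a x = 0" for x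
    proof (rule ccontr)
      assume "\<not> (a (x - s) = 0 \<or> a x = 0)"
      then have "norm (x - s) < R" "norm x < R" unfolding a_def by (auto split: if_splits)
      moreover have "norm s \<le> norm x + norm (x - s)" using norm_triangle_ineq4[of x "x - s"] by simp
      ultimately show False using s by linarith
    qed
    have ams: "(\<lambda>x. a (x - s)) \<in> borel_measurable lebesgue" by (rule meas_translate'[OF am])
    have "N2 (\<lambda>x. a (x - s) - a x) = (\<integral>\<^sup>+x. ennreal ((cmod (a (x - s)))\<^sup>2) + ennreal ((cmod (a x))\<^sup>2) \<partial>lebesgue)"
      unfolding N2_def
    proof (rule nn_integral_cong)
      fix x
      show "ennreal ((cmod (a (x - s) - a x))\<^sup>2) = ennreal ((cmod (a (x - s)))\<^sup>2) + ennreal ((cmod (a x))\<^sup>2)"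
        using disj[of x] by auto
    qed
    also have "\<dots> = N2 (\<lambda>x. a (x - s)) + N2 a"
      unfolding N2_def using ams am by (intro nn_integral_add) auto
    also have "\<dots> = 2 * N2 a" using N2_translate[OF am] by (simp add: mult_2)
    finally have Na: "2 * N2 a = N2 (\<lambda>x. a (x - s) - a x)" by simp
    have "(\<lambda>x. a (x - s) - a x) = (\<lambda>x. (h (x - s) - h x) - (b (x - s) - b x))"
      unfolding a_def b_def by auto
    then have "N2 (\<lambda>x. a (x - s) - a x) \<le> 2 * N2 (\<lambda>x. h (x - s) - h x) + 2 * N2 (\<lambda>x. b (x - s) - b x)"
      using N2_diff[of "\<lambda>x. h (x - s) - h x" "\<lambda>x. b (x - s) - b x"] meas_translate'[OF hm, of s]
        meas_translate'[OF bm, of s] hm bm by simp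
    moreover have "N2 (\<lambda>x. b (x - s) - b x) \<le> 4 * N2 b"
    proof -
      have "N2 (\<lambda>x. b (x - s) - b x) \<le> 2 * N2 b + 2 * N2 b"
        using N2_diff[OF meas_translate'[OF bm, of s] bm] N2_translate[OF bm, of s] by simp
      also have "\<dots> = (2 + 2) * N2 b" by (rule distrib_right[symmetric])
      also have "(2 + 2 :: ennreal) = 4" by simp
      finally show ?thesis .
    qed
    ultimately have "2 * N2 a \<le> 2 * N2 (\<lambda>x. h (x - s) - h x) + 8 * N2 b"
    proof -
      assume A: "N2 (\<lambda>x. a (x - s) - a x) \<le> 2 * N2 (\<lambda>x. h (x - s) - h x) + 2 * N2 (\<lambda>x. b (x - s) - b x)"
        and B: "N2 (\<lambda>x. b (x - s) - b x) \<le> 4 * N2 b"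
      have "2 * N2 (\<lambda>x. b (x - s) - b x) \<le> 2 * (4 * N2 b)" using B by (rule mult_left_mono) simp
      also have "2 * (4 * N2 b) = 8 * N2 b" by (simp add: mult.assoc[symmetric])
      finally have "2 * N2 (\<lambda>x. h (x - s) - h x) + 2 * N2 (\<lambda>x. b (x - s) - b x) \<le> 2 * N2 (\<lambda>x. h (x - s) - h x) + 8 * N2 b"
        by (rule add_left_mono)
      then show ?thesis using A unfolding Na by (rule order_trans[rotated])
    qed
    then have "2 * N2 a + 2 * N2 b \<le> (2 * N2 (\<lambda>x. h (x - s) - h x) + 8 * N2 b) + 2 * N2 b"
      by (rule add_right_mono)
    then have "N2 h \<le> (2 * N2 (\<lambda>x. h (x - s) - h x) + 8 * N2 b) + 2 * N2 b"
      using Nh by (rule order_trans[rotated])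
    also have "(2 * N2 (\<lambda>x. h (x - s) - h x) + 8 * N2 b) + 2 * N2 b = 2 * N2 (\<lambda>x. h (x - s) - h x) + (8 + 2) * N2 b"
      by (simp only: add.assoc distrib_right)
    also have "(8 + 2 :: ennreal) = 10" by simp
    also have "10 * N2 b \<le> 10 * ennreal (\<epsilon> / 10)" using Nb by (rule mult_left_mono) simp
    also have "10 * ennreal (\<epsilon> / 10) = ennreal \<epsilon>"
    proof -
      have "ennreal 10 * ennreal (\<epsilon> / 10) = ennreal (10 * (\<epsilon> / 10))"
        by (rule ennreal_mult[symmetric]) (use e in auto)
      then show ?thesis by simp
    qed
    finally show "N2 h \<le> 2 * N2 (\<lambda>x. h (x - s) - h x) + ennreal \<epsilon>" by - (simp add: add_left_mono)
  qed
qed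

definition ph :: "'a::euclidean_space \<Rightarrow> 'a \<times> 'a \<Rightarrow> complex" where
  "ph \<nu> l = exp (\<i> * of_real (snd l \<bullet> \<nu>))"

lemma ph_norm[simp]: "cmod (ph \<nu> l) = 1"
  unfolding ph_def by simp

lemma E1: "l1_op c (tf_shift (\<nu>, 0) f) x = l1_op (\<lambda>l. c l * ph \<nu> l) f (x - \<nu>)"
  unfolding l1_op_def
proof (rule infsum_cong)
  fix l :: "'a \<times> 'a"
  have "exp (\<i> * of_real (snd l \<bullet> \<nu>)) * exp (\<i> * of_real (snd l \<bullet> (x - \<nu>))) = exp (\<i> * of_real (snd l \<bullet> x))"
    by (simp add: exp_add[symmetric] inner_diff_right algebra_simps)
  then show "c l * tf_shift l (tf_shift (\<nu>, 0) f) x = c l * ph \<nu> l * tf_shift l f (x - \<nu>)"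
    unfolding tf_shift_def ph_def by (simp add: algebra_simps)
qed

lemma comb2:
  fixes X Y :: ennreal
  assumes "X \<le> ennreal a" "Y \<le> ennreal b" "a \<ge> 0" "b \<ge> 0"
  shows "2 * X + 2 * Y \<le> ennreal (2 * a + 2 * b)"
proof -
  have "2 * X + 2 * Y \<le> 2 * ennreal a + 2 * ennreal b"
    using assms by (intro add_mono mult_left_mono) auto
  also have "\<dots> = ennreal (2 * a + 2 * b)"
    using assms by (simp add: ennreal_plus ennreal_mult)
  finally show ?thesis .
qed

lemma S_meas:
  fixes a b :: "'a \<Rightarrow> complex"
  assumes "a \<in> borel_measurable M" "(\<lambda>x. a x - b x) \<in> borel_measurable M"
  shows "b \<in> borel_measurable M"
proof -
  have "(\<lambda>x. a x - (a x - b x)) \<in> borel_measurable M"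
    using borel_measurable_diff[OF assms] .
  then show ?thesis by simp
qed

lemma shift_err:
  fixes T :: "('a::euclidean_space \<Rightarrow> complex) \<Rightarrow> ('a \<Rightarrow> complex)" and c :: "'a \<times> 'a \<Rightarrow> complex"
    and g :: "nat \<Rightarrow> 'a \<times> 'a"
  assumes app: "\<And>h. h \<in> L2 \<Longrightarrow> T h \<in> L2 \<and> (\<lambda>x. T h x - l1_op c h x) \<in> L2 \<and>
                   N2 (\<lambda>x. T h x - l1_op c h x) \<le> ennreal (e\<^sup>2) * N2 h"
    and inj: "inj g" and z: "\<And>l. l \<notin> range g \<Longrightarrow> c l = 0"
    and ws: "summable (\<lambda>n. cmod (c (g n)))"
    and f: "f \<in> L2" "N2 f \<le> 1"
    and e: "e \<ge> 0"
    and small: "(\<Sum>n. cmod (c (g n)) * cmod (ph \<nu> (g n) - 1)) \<le> 3 * e"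
  shows "N2 (\<lambda>x. T (tf_shift (\<nu>, 0) f) x - l1_op c f (x - \<nu>)) \<le> ennreal (20 * e\<^sup>2)"
proof -
  define Uf where "Uf = tf_shift (\<nu>, 0) f"
  have fm: "f \<in> borel_measurable lebesgue" using f by (simp add: L2_def)
  have Uf: "Uf \<in> L2" unfolding Uf_def by (rule L2_tf_shift[OF f(1)])
  have NUf: "N2 Uf = N2 f" unfolding Uf_def by (rule N2_tf_shift[OF fm])
  have TU: "T Uf \<in> L2" and D1: "(\<lambda>x. T Uf x - l1_op c Uf x) \<in> L2"
    and ND1: "N2 (\<lambda>x. T Uf x - l1_op c Uf x) \<le> ennreal (e\<^sup>2) * N2 Uf"
    using app[OF Uf] by auto
  have Tf: "T f \<in> L2" and Df: "(\<lambda>x. T f x - l1_op c f x) \<in> L2" using app[OF f(1)] by auto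
  have SUm: "l1_op c Uf \<in> borel_measurable lebesgue"
    using TU D1 S_meas[of "T Uf" lebesgue "l1_op c Uf"] by (simp add: L2_def)
  have Sfm: "l1_op c f \<in> borel_measurable lebesgue"
    using Tf Df S_meas[of "T f" lebesgue "l1_op c f"] by (simp add: L2_def)
  define G where "G y = l1_op (\<lambda>l. c l * ph \<nu> l) f y - l1_op c f y" for y
  have Geq: "G = (\<lambda>y. l1_op c Uf (y + \<nu>) - l1_op c f y)"
    unfolding G_def Uf_def by (rule ext) (simp add: E1)
  have Gm: "G \<in> borel_measurable lebesgue"
    unfolding Geq using meas_translate[OF SUm, of \<nu>] Sfm by measurable
  define w where "w n = cmod (c (g n))" for n
  define w' where "w' n = cmod (c (g n)) * cmod (ph \<nu> (g n) - 1)" for n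
  have wfun: "w = (\<lambda>n. cmod (c (g n)))" by (rule ext) (simp add: w_def)
  have w0: "w n \<ge> 0" for n unfolding w_def by simp
  have w'0: "w' n \<ge> 0" for n unfolding w'_def by simp
  have w'le: "w' n \<le> 2 * w n" for n
  proof -
    have "cmod (ph \<nu> (g n) - 1) \<le> 2"
      using norm_triangle_ineq4[of "ph \<nu> (g n)" 1] by simp
    then have "cmod (c (g n)) * cmod (ph \<nu> (g n) - 1) \<le> cmod (c (g n)) * 2"
      by (intro mult_left_mono) auto
    then show ?thesis unfolding w'_def w_def by (simp add: mult.commute)
  qed
  have wsum: "summable w" using ws unfolding w_def .
  have w'sum: "summable w'"
    by (rule summable_comparison_test[of _ "\<lambda>n. 2 * w n"]) (use w'le w'0 wsum in \<open>auto intro!: summable_mult\<close>)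
  have MajF: "(\<integral>\<^sup>+x. (Maj w g f x)\<^sup>2 \<partial>lebesgue) \<le> ennreal ((suminf w)\<^sup>2) * N2 f"
    by (rule Maj_bound[OF w0 wsum fm])
  have N2f: "N2 f < \<infinity>" using f(1) by (simp add: L2_iff)
  have "(\<integral>\<^sup>+x. (Maj w g f x)\<^sup>2 \<partial>lebesgue) \<noteq> \<infinity>"
  proof -
    have "ennreal ((suminf w)\<^sup>2) * N2 f < \<infinity>" using N2f by (simp add: ennreal_mult_less_top)
    then show ?thesis using MajF by (metis infinity_ennreal_def le_less_trans less_top)
  qed
  then have "AE x in lebesgue. (Maj w g f x)\<^sup>2 \<noteq> \<infinity>"
    by (intro nn_integral_PInf_AE) (use Maj_meas[OF fm] in measurable)
  then have AEfin: "AE x in lebesgue. Maj w g f x \<noteq> \<infinity>"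
    by eventually_elim (auto simp: power2_eq_square)
  have ptw: "ennreal (cmod (G y)) \<le> Maj w' g f y" if a: "Maj w g f y \<noteq> \<infinity>" for y
  proof -
    have a': "Maj (\<lambda>n. cmod (c (g n))) g f y \<noteq> \<infinity>" using a wfun by simp
    have wf': "w' = (\<lambda>n. cmod (c (g n)) * cmod (ph \<nu> (g n) - 1))" by (rule ext) (simp add: w'_def)
    show ?thesis unfolding G_def wf' by (rule G_bound[OF inj z ph_norm a'])
  qed
  have AEG: "AE y in lebesgue. ennreal (cmod (G y)) \<le> Maj w' g f y"
    using AEfin by (rule eventually_mono) (rule ptw)
  have "N2 G \<le> (\<integral>\<^sup>+y. (Maj w' g f y)\<^sup>2 \<partial>lebesgue)"
    unfolding N2_def
  proof (rule nn_integral_mono_AE)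
    show "AE y in lebesgue. ennreal ((cmod (G y))\<^sup>2) \<le> (Maj w' g f y)\<^sup>2"
      using AEG
    proof eventually_elim
      case (elim y)
      have "ennreal ((cmod (G y))\<^sup>2) = (ennreal (cmod (G y)))\<^sup>2" by (simp add: ennreal_power)
      also have "\<dots> \<le> (Maj w' g f y)\<^sup>2" using elim by (rule power_mono) simp
      finally show ?case .
    qed
  qed
  also have "\<dots> \<le> ennreal ((suminf w')\<^sup>2) * N2 f"
    by (rule Maj_bound[OF w'0 w'sum fm])
  also have "\<dots> \<le> ennreal ((3 * e)\<^sup>2) * 1"
  proof (rule mult_mono)
    have "suminf w' \<le> 3 * e" using small unfolding w'_def .
    moreover have "suminf w' \<ge> 0" using w'sum w'0 by (simp add: suminf_nonneg)
    ultimately show "ennreal ((suminf w')\<^sup>2) \<le> ennreal ((3 * e)\<^sup>2)"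
      by (intro ennreal_leI power_mono) auto
  qed (use f in auto)
  finally have NG: "N2 G \<le> ennreal (9 * e\<^sup>2)" by (simp add: power_mult_distrib)
  have NGs: "N2 (\<lambda>x. G (x - \<nu>)) \<le> ennreal (9 * e\<^sup>2)" using N2_translate[OF Gm] NG by simp
  have ND1': "N2 (\<lambda>x. T Uf x - l1_op c Uf x) \<le> ennreal (e\<^sup>2)"
  proof -
    have "ennreal (e\<^sup>2) * N2 Uf \<le> ennreal (e\<^sup>2) * 1" using f(2) NUf by (intro mult_left_mono) auto
    then show ?thesis using ND1 by simp
  qed
  have feq: "(\<lambda>x. T Uf x - l1_op c f (x - \<nu>)) = (\<lambda>x. (T Uf x - l1_op c Uf x) + G (x - \<nu>))"
    unfolding G_def Uf_def by (rule ext) (simp add: E1)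
  have "N2 (\<lambda>x. T Uf x - l1_op c f (x - \<nu>)) \<le> 2 * N2 (\<lambda>x. T Uf x - l1_op c Uf x) + 2 * N2 (\<lambda>x. G (x - \<nu>))"
    unfolding feq using D1 meas_translate'[OF Gm, of \<nu>] by (intro N2_add) (auto simp: L2_def)
  also have "\<dots> \<le> ennreal (2 * e\<^sup>2 + 2 * (9 * e\<^sup>2))"
    by (rule comb2[OF ND1' NGs]) auto
  finally show ?thesis unfolding Uf_def by simp
qed

lemma enum_support:
  fixes c :: "'a::euclidean_space \<times> 'a \<Rightarrow> complex"
  assumes cs: "(\<lambda>l. norm (c l)) summable_on UNIV"
  obtains g :: "nat \<Rightarrow> 'a \<times> 'a" where "inj g" "\<And>l. l \<notin> range g \<Longrightarrow> c l = 0"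
    "summable (\<lambda>n. cmod (c (g n)))"
proof -
  define D where "D = {l \<in> UNIV. c l \<noteq> 0}"
  have cD: "countable D" unfolding D_def using abs_summable_countable[OF cs] .
  obtain u :: 'a where u: "u \<in> Basis" using nonempty_Basis by blast
  have u0: "u \<noteq> 0" using u by auto
  define k where "k n = (real n *\<^sub>R u, 0::'a)" for n :: nat
  have ik: "inj k" unfolding k_def inj_def using u0 by auto
  define E where "E = D \<union> range k"
  have cE: "countable E" unfolding E_def using cD by auto
  have iE: "infinite E" unfolding E_def using range_inj_infinite[OF ik] by (meson infinite_Un)
  define g where "g = from_nat_into E"
  have bij: "bij_betw g UNIV E" unfolding g_def by (rule bij_betw_from_nat_into[OF cE iE])
  then have ig: "inj g" and rg: "range g = E" by (auto simp: bij_betw_def)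
  show ?thesis
  proof
    show "inj g" by (rule ig)
    show "c l = 0" if "l \<notin> range g" for l using that rg unfolding E_def D_def by auto
    have "(\<lambda>l. norm (c l)) summable_on range g"
      by (rule summable_on_subset_banach[OF cs]) simp
    then have "((\<lambda>l. norm (c l)) \<circ> g) summable_on UNIV"
      using summable_on_reindex[of g UNIV "\<lambda>l. norm (c l)"] ig by simp
    then have "(\<lambda>n. cmod (c (g n))) summable_on UNIV" by (simp add: o_def)
    then show "summable (\<lambda>n. cmod (c (g n)))"
      by (subst summable_on_UNIV_nonneg_real_iff[symmetric]) auto
  qed
qed

lemma phase_sum:
  fixes w :: "nat \<Rightarrow> real" and q :: "nat \<Rightarrow> real"
  assumes w0: "\<And>n. w n \<ge> 0" and ws: "summable w"
    and q0: "\<And>n. q n \<ge> 0" and q2: "\<And>n. q n \<le> 2"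
    and qN: "\<And>i. i < N \<Longrightarrow> q i \<le> \<delta>" and d: "\<delta> \<ge> 0"
    and tail: "(\<Sum>i. w (i + N)) \<le> e" and dw: "\<delta> * suminf w \<le> e"
  shows "(\<Sum>n. w n * q n) \<le> 3 * e"
proof -
  have b: "w n * q n \<le> 2 * w n" for n
    using mult_left_mono[OF q2[of n] w0[of n]] by (simp add: mult.commute)
  have ws': "summable (\<lambda>n. w n * q n)"
    by (rule summable_comparison_test'[of "\<lambda>n. 2 * w n" 0]) (use w0 q0 b ws in \<open>auto intro!: summable_mult\<close>)
  have "(\<Sum>n. w n * q n) = (\<Sum>n. w (n + N) * q (n + N)) + (\<Sum>i<N. w i * q i)"
    by (rule suminf_split_initial_segment[OF ws'])
  also have "(\<Sum>i<N. w i * q i) \<le> (\<Sum>i<N. w i * \<delta>)"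
    by (rule sum_mono) (use w0 qN in \<open>auto intro: mult_left_mono\<close>)
  also have "(\<Sum>i<N. w i * \<delta>) = \<delta> * (\<Sum>i<N. w i)" by (simp add: sum_distrib_left mult.commute)
  also have "\<dots> \<le> \<delta> * suminf w" using d by (intro mult_left_mono sum_le_suminf[OF ws]) (auto simp: w0)
  also have "(\<Sum>n. w (n + N) * q (n + N)) \<le> (\<Sum>n. 2 * w (n + N))"
  proof (rule suminf_le)
    show "w (n + N) * q (n + N) \<le> 2 * w (n + N)" for n
      using mult_left_mono[OF q2[of "n + N"] w0[of "n + N"]] by (simp add: mult.commute)
    show "summable (\<lambda>n. w (n + N) * q (n + N))" using summable_ignore_initial_segment[OF ws', of N] .
    show "summable (\<lambda>n. 2 * w (n + N))" using summable_ignore_initial_segment[OF ws, of N] by (intro summable_mult)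
  qed
  also have "(\<Sum>n. 2 * w (n + N)) = 2 * (\<Sum>n. w (n + N))"
    using summable_ignore_initial_segment[OF ws, of N] by (rule suminf_mult)
  finally show ?thesis using tail dw by linarith
qed

lemma L2norm_nonneg: "L2norm f \<ge> 0" unfolding L2norm_def by simp

lemma N2_le_L2norm: assumes "g \<in> L2" "L2norm g \<le> a" shows "N2 g \<le> ennreal (a\<^sup>2)"
  using assms N2_L2norm[OF assms(1)] L2norm_nonneg[of g] by (simp add: power_mono)

lemma main_bound:
  fixes T :: "('a::euclidean_space \<Rightarrow> complex) \<Rightarrow> ('a \<Rightarrow> complex)" and c :: "'a \<times> 'a \<Rightarrow> complex"
  assumes cT: "compact_op T"
    and cs: "(\<lambda>l. norm (c l)) summable_on UNIV"
    and e: "e > 0"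
    and app: "\<And>h. h \<in> L2 \<Longrightarrow> T h \<in> L2 \<and> (\<lambda>x. T h x - l1_op c h x) \<in> L2 \<and>
                   N2 (\<lambda>x. T h x - l1_op c h x) \<le> ennreal (e\<^sup>2) * N2 h"
    and f: "f \<in> L2" "N2 f \<le> 1"
  shows "N2 (l1_op c f) \<le> ennreal (400 * e\<^sup>2)"
proof -
  obtain g where ig: "inj g" and z: "\<And>l. l \<notin> range g \<Longrightarrow> c l = 0"
    and ws: "summable (\<lambda>n. cmod (c (g n)))"
    using enum_support[OF cs] by blast
  define w where "w n = cmod (c (g n))" for n
  have w0: "w n \<ge> 0" for n unfolding w_def by simp
  have wsum: "summable w" using ws unfolding w_def .
  define A where "A = suminf w"
  have A0: "A \<ge> 0" unfolding A_def using wsum w0 by (simp add: suminf_nonneg)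
  obtain N where "\<forall>n\<ge>N. norm (\<Sum>i. w (i + n)) < e"
    using suminf_exist_split[OF e wsum] by blast
  then have tail: "(\<Sum>i. w (i + N)) \<le> e" by fastforce
  define \<delta> where "\<delta> = e / (A + 1)"
  have d0: "\<delta> > 0" unfolding \<delta>_def using e A0 by simp
  have dA: "\<delta> * A \<le> e"
  proof -
    have "\<delta> * A = e * (A / (A + 1))" unfolding \<delta>_def by simp
    also have "\<dots> \<le> e * 1" using e A0 by (intro mult_left_mono) auto
    finally show ?thesis by simp
  qed
  have "\<forall>j::nat. \<exists>\<nu>::'a. norm \<nu> \<ge> real j \<and> (\<forall>i<N. cmod (ph \<nu> (g i) - 1) \<le> \<delta>)"
  proof
    fix j :: nat
    obtain \<nu> :: 'a where "norm \<nu> \<ge> real j" "\<And>i. i < N \<Longrightarrow> cmod (exp (\<i> * of_real (snd (g i) \<bullet> \<nu>)) - 1) \<le> \<delta>"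
      using phases[OF d0, of "real j" N "\<lambda>i. snd (g i)"] by blast
    then show "\<exists>\<nu>::'a. norm \<nu> \<ge> real j \<and> (\<forall>i<N. cmod (ph \<nu> (g i) - 1) \<le> \<delta>)"
      unfolding ph_def by blast
  qed
  then obtain \<nu>s :: "nat \<Rightarrow> 'a" where \<nu>s: "\<And>j. norm (\<nu>s j) \<ge> real j"
    "\<And>j i. i < N \<Longrightarrow> cmod (ph (\<nu>s j) (g i) - 1) \<le> \<delta>"
    by metis
  have small: "(\<Sum>n. cmod (c (g n)) * cmod (ph (\<nu>s j) (g n) - 1)) \<le> 3 * e" for j
  proof -
    have "(\<Sum>n. w n * cmod (ph (\<nu>s j) (g n) - 1)) \<le> 3 * e"
    proof (rule phase_sum[OF w0 wsum _ _ _ _ tail])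
      show "cmod (ph (\<nu>s j) (g n) - 1) \<le> 2" for n
        using norm_triangle_ineq4[of "ph (\<nu>s j) (g n)" 1] by simp
      show "\<delta> * suminf w \<le> e" using dA unfolding A_def .
    qed (use \<nu>s(2) d0 in auto)
    then show ?thesis unfolding w_def .
  qed
  have err: "N2 (\<lambda>x. T (tf_shift (\<nu>s j, 0) f) x - l1_op c f (x - \<nu>s j)) \<le> ennreal (20 * e\<^sup>2)" for j
    by (rule shift_err[OF app ig z ws f _ small]) (use e in auto)
  define F where "F j = tf_shift (\<nu>s j, 0) f" for j
  have fm: "f \<in> borel_measurable lebesgue" using f by (simp add: L2_def)
  have FL2: "F j \<in> L2" for j unfolding F_def by (rule L2_tf_shift[OF f(1)])
  have Fn: "L2norm (F j) \<le> 1" for j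
  proof -
    have "ennreal ((L2norm (F j))\<^sup>2) = N2 f"
      using N2_L2norm[OF FL2[of j]] N2_tf_shift[OF fm] unfolding F_def by simp
    then have "ennreal ((L2norm (F j))\<^sup>2) \<le> ennreal 1" using f(2) by simp
    then have "(L2norm (F j))\<^sup>2 \<le> 1" by (simp add: ennreal_le_iff2)
    then show ?thesis using L2norm_nonneg[of "F j"] by (simp add: power_le_one_iff abs_le_iff power2_le_iff_abs_le)
  qed
  obtain r g0 where r: "strict_mono r" and g0: "g0 \<in> L2"
    and lim: "(\<lambda>n. L2norm (\<lambda>x. T (F (r n)) x - g0 x)) \<longlonglongrightarrow> 0"
    using cT FL2 Fn unfolding compact_op_def by blast
  from lim have "eventually (\<lambda>n. L2norm (\<lambda>x. T (F (r n)) x - g0 x) < e) sequentially"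
    using e by (simp add: order_tendsto_iff)
  then obtain N0 where N0: "\<And>n. n \<ge> N0 \<Longrightarrow> L2norm (\<lambda>x. T (F (r n)) x - g0 x) < e"
    by (auto simp: eventually_sequentially)
  have TF: "T (F j) \<in> L2" for j using app[OF FL2[of j]] by simp
  have conv: "N2 (\<lambda>x. T (F (r n)) x - g0 x) \<le> ennreal (e\<^sup>2)" if "n \<ge> N0" for n
    by (rule N2_le_L2norm[OF L2_diff[OF TF g0]]) (use N0[OF that] in simp)
  define Sf where "Sf = l1_op c f"
  have Tf: "T f \<in> L2" and Df: "(\<lambda>x. T f x - Sf x) \<in> L2" using app[OF f(1)] unfolding Sf_def by auto
  have Sfm: "Sf \<in> borel_measurable lebesgue"
    using Tf Df S_meas[of "T f" lebesgue Sf] by (simp add: L2_def)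
  have SfL2: "Sf \<in> L2"
  proof -
    have "(\<lambda>x. T f x - (T f x - Sf x)) \<in> L2" by (rule L2_diff[OF Tf Df])
    then show ?thesis by simp
  qed
  have g0m: "g0 \<in> borel_measurable lebesgue" using g0 by (simp add: L2_def)
  have Dn: "N2 (\<lambda>x. Sf (x - \<nu>s (r n)) - g0 x) \<le> ennreal (42 * e\<^sup>2)" if "n \<ge> N0" for n
  proof -
    have TFm: "T (F (r n)) \<in> borel_measurable lebesgue" using TF by (simp add: L2_def)
    have eq: "(\<lambda>x. Sf (x - \<nu>s (r n)) - g0 x) =
        (\<lambda>x. (T (F (r n)) x - g0 x) - (T (F (r n)) x - Sf (x - \<nu>s (r n))))" by auto
    have "N2 (\<lambda>x. Sf (x - \<nu>s (r n)) - g0 x) \<le>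
        2 * N2 (\<lambda>x. T (F (r n)) x - g0 x) + 2 * N2 (\<lambda>x. T (F (r n)) x - Sf (x - \<nu>s (r n)))"
      unfolding eq using TFm g0m meas_translate'[OF Sfm, of "\<nu>s (r n)"] by (intro N2_diff) auto
    also have "\<dots> \<le> ennreal (2 * e\<^sup>2 + 2 * (20 * e\<^sup>2))"
      using conv[OF that] err[of "r n"] unfolding F_def Sf_def by (intro comb2) auto
    finally show ?thesis by simp
  qed
  obtain R where R: "\<And>s. norm s > 2 * R \<Longrightarrow> N2 Sf \<le> 2 * N2 (\<lambda>x. Sf (x - s) - Sf x) + ennreal (e\<^sup>2)"
    using far_shift[OF SfL2, of "e\<^sup>2"] e by auto
  define \<nu>0 where "\<nu>0 = \<nu>s (r N0)"
  define k where "k = N0 + nat \<lceil>norm \<nu>0 + 2 * \<bar>R\<bar>\<rceil> + 1"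
  define \<nu>1 where "\<nu>1 = \<nu>s (r k)"
  have kN0: "k \<ge> N0" unfolding k_def by simp
  have "real k \<le> real (r k)" using seq_suble[OF r, of k] by simp
  moreover have "norm \<nu>1 \<ge> real (r k)" unfolding \<nu>1_def by (rule \<nu>s(1))
  moreover have "real k > norm \<nu>0 + 2 * \<bar>R\<bar>" unfolding k_def by linarith
  ultimately have n1: "norm \<nu>1 > norm \<nu>0 + 2 * \<bar>R\<bar>" by linarith
  define s where "s = \<nu>1 - \<nu>0"
  have "norm s \<ge> norm \<nu>1 - norm \<nu>0" unfolding s_def by (rule norm_triangle_ineq2)
  then have sR: "norm s > 2 * R" using n1 by linarith
  have D01: "N2 (\<lambda>x. Sf (x - \<nu>1) - Sf (x - \<nu>0)) \<le> ennreal (2 * (42 * e\<^sup>2) + 2 * (42 * e\<^sup>2))"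
  proof -
    have eq: "(\<lambda>x. Sf (x - \<nu>1) - Sf (x - \<nu>0)) = (\<lambda>x. (Sf (x - \<nu>1) - g0 x) - (Sf (x - \<nu>0) - g0 x))" by auto
    have "N2 (\<lambda>x. Sf (x - \<nu>1) - Sf (x - \<nu>0)) \<le> 2 * N2 (\<lambda>x. Sf (x - \<nu>1) - g0 x) + 2 * N2 (\<lambda>x. Sf (x - \<nu>0) - g0 x)"
      unfolding eq using g0m meas_translate'[OF Sfm, of \<nu>1] meas_translate'[OF Sfm, of \<nu>0] by (intro N2_diff) auto
    also have "\<dots> \<le> ennreal (2 * (42 * e\<^sup>2) + 2 * (42 * e\<^sup>2))"
      using Dn[OF kN0] Dn[of N0] unfolding \<nu>1_def \<nu>0_def by (intro comb2) auto
    finally show ?thesis .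
  qed
  have phim: "(\<lambda>y. Sf (y - s) - Sf y) \<in> borel_measurable lebesgue"
    using meas_translate'[OF Sfm, of s] Sfm by measurable
  have "N2 (\<lambda>y. Sf (y - s) - Sf y) = N2 (\<lambda>x. Sf (x - \<nu>0 - s) - Sf (x - \<nu>0))"
    using N2_translate[OF phim, of \<nu>0] by simp
  also have "(\<lambda>x. Sf (x - \<nu>0 - s) - Sf (x - \<nu>0)) = (\<lambda>x. Sf (x - \<nu>1) - Sf (x - \<nu>0))"
    unfolding s_def by (simp add: algebra_simps)
  finally have Ns: "N2 (\<lambda>y. Sf (y - s) - Sf y) \<le> ennreal (168 * e\<^sup>2)" using D01 by simp
  have "N2 Sf \<le> 2 * N2 (\<lambda>x. Sf (x - s) - Sf x) + ennreal (e\<^sup>2)" by (rule R[OF sR])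
  also have "\<dots> \<le> 2 * ennreal (168 * e\<^sup>2) + ennreal (e\<^sup>2)"
    using Ns by (intro add_right_mono mult_left_mono) auto
  also have "\<dots> = ennreal (337 * e\<^sup>2)"
  proof -
    have "ennreal (2 * (168 * e\<^sup>2)) = ennreal 2 * ennreal (168 * e\<^sup>2)" by (rule ennreal_mult) auto
    then have a: "2 * ennreal (168 * e\<^sup>2) = ennreal (2 * (168 * e\<^sup>2))" by simp
    have "ennreal (2 * (168 * e\<^sup>2)) + ennreal (e\<^sup>2) = ennreal (2 * (168 * e\<^sup>2) + e\<^sup>2)"
      by (rule ennreal_plus[symmetric]) auto
    then show ?thesis unfolding a by simp
  qed
  also have "\<dots> \<le> ennreal (400 * e\<^sup>2)" by (intro ennreal_leI) simp
  finally show ?thesis unfolding Sf_def .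
qed

lemma l1_op_scale:
  assumes "a \<noteq> 0"
  shows "l1_op c (\<lambda>x. a * f x) x = a * l1_op c f x"
proof -
  have "l1_op c (\<lambda>x. a * f x) x = (\<Sum>\<^sub>\<infinity>l. a * (c l * tf_shift l f x))"
    unfolding l1_op_def tf_shift_def by (rule infsum_cong) (simp add: algebra_simps)
  also have "\<dots> = a * l1_op c f x" unfolding l1_op_def by (rule infsum_cmult_right')
  finally show ?thesis .
qed

lemma ennreal_small_zero:
  fixes X :: ennreal
  assumes K: "K > 0" and b: "\<And>e. e > 0 \<Longrightarrow> X \<le> ennreal (K * e\<^sup>2)"
  shows "X = 0"
proof (rule ccontr)
  assume X0: "X \<noteq> 0"
  have "X \<le> ennreal (K * 1\<^sup>2)" using b[of 1] by simp
  then obtain x where x: "X = ennreal x" "x \<ge> 0"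
    by (metis ennreal_cases ennreal_neq_top neq_top_trans)
  then have xp: "x > 0" using X0 by (metis ennreal_0 order_le_less)
  define e where "e = sqrt (x / (2 * K))"
  have e0: "e > 0" unfolding e_def using xp K by simp
  have "e\<^sup>2 = x / (2 * K)" unfolding e_def using xp K by simp
  then have "K * e\<^sup>2 = x / 2" using K by simp
  then have "ennreal x \<le> ennreal (x / 2)" using b[OF e0] x by simp
  then have "x \<le> x / 2" using xp by (simp add: ennreal_le_iff)
  then show False using xp by simp
qed

theorem corollary5:
  fixes T :: "('a::euclidean_space \<Rightarrow> complex) \<Rightarrow> ('a \<Rightarrow> complex)"
  assumes "in_A T" and "compact_op T"
  shows "\<forall>f\<in>L2. AE x in lebesgue. T f x = 0"
proof
  fix f :: "'a \<Rightarrow> complex" assume f: "f \<in> L2"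
  have fm: "f \<in> borel_measurable lebesgue" using f by (simp add: L2_def)
  have Tf: "T f \<in> L2" using assms(1) f unfolding in_A_def by blast
  define L where "L = L2norm f"
  have L0: "L \<ge> 0" unfolding L_def by (rule L2norm_nonneg)
  define \<alpha> where "\<alpha> = L + 1"
  have a1: "\<alpha> \<ge> 1" unfolding \<alpha>_def using L0 by simp
  define f' where "f' x = complex_of_real (1 / \<alpha>) * f x" for x
  have f'm: "f' \<in> borel_measurable lebesgue" unfolding f'_def[abs_def] using fm by measurable
  have Nf: "N2 f = ennreal (L\<^sup>2)" unfolding L_def by (rule N2_L2norm[OF f])
  have Nf': "N2 f' = ennreal ((1/\<alpha>)\<^sup>2) * N2 f"
  proof -
    have ca: "cmod (1 / complex_of_real \<alpha>) = 1 / \<alpha>" using a1 by (simp add: norm_divide)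
    show ?thesis unfolding f'_def using N2_scale[OF fm, of "complex_of_real (1/\<alpha>)"] a1 by (simp add: ca)
  qed
  have f'L2: "f' \<in> L2" using Nf' f'm Nf by (simp add: L2_iff ennreal_mult_less_top flip: ennreal_mult)
  have f'1: "N2 f' \<le> 1"
  proof -
    have eq: "N2 f' = ennreal ((1/\<alpha>)\<^sup>2 * L\<^sup>2)" unfolding Nf' Nf by (simp add: ennreal_mult)
    have "(1/\<alpha>)\<^sup>2 * L\<^sup>2 = (L / \<alpha>)\<^sup>2" by (simp add: power_divide)
    also have "(L / \<alpha>)\<^sup>2 \<le> 1"
    proof -
      have "L / \<alpha> \<le> 1" using a1 L0 unfolding \<alpha>_def by simp
      moreover have "L / \<alpha> \<ge> 0" using a1 L0 by simp
      ultimately show ?thesis by (simp add: power_le_one)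
    qed
    finally have "(1/\<alpha>)\<^sup>2 * L\<^sup>2 \<le> 1" .
    then show ?thesis unfolding eq using ennreal_leI by fastforce
  qed
  define K where "K = 2 * L\<^sup>2 + 2 * (\<alpha>\<^sup>2 * 400)"
  have K0: "K > 0" unfolding K_def using a1 by (simp add: add_nonneg_pos)
  have bound: "N2 (T f) \<le> ennreal (K * e\<^sup>2)" if e: "e > 0" for e
  proof -
    obtain c where cs: "(\<lambda>l. norm (c l)) summable_on UNIV"
      and cap: "\<And>h. h \<in> L2 \<Longrightarrow> (\<lambda>x. T h x - l1_op c h x) \<in> L2 \<and> L2norm (\<lambda>x. T h x - l1_op c h x) \<le> e * L2norm h"
      using assms(1) e unfolding in_A_def by blast
    have app: "T h \<in> L2 \<and> (\<lambda>x. T h x - l1_op c h x) \<in> L2 \<and>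
                   N2 (\<lambda>x. T h x - l1_op c h x) \<le> ennreal (e\<^sup>2) * N2 h" if h: "h \<in> L2" for h
    proof (intro conjI)
      show "T h \<in> L2" using assms(1) h unfolding in_A_def by blast
      show "(\<lambda>x. T h x - l1_op c h x) \<in> L2" using cap[OF h] by blast
      have "N2 (\<lambda>x. T h x - l1_op c h x) \<le> ennreal ((e * L2norm h)\<^sup>2)"
        by (rule N2_le_L2norm) (use cap[OF h] in auto)
      also have "\<dots> = ennreal (e\<^sup>2) * N2 h"
        unfolding N2_L2norm[OF h] by (simp add: power_mult_distrib ennreal_mult)
      finally show "N2 (\<lambda>x. T h x - l1_op c h x) \<le> ennreal (e\<^sup>2) * N2 h" .
    qed
    have MB: "N2 (l1_op c f') \<le> ennreal (400 * e\<^sup>2)"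
      by (rule main_bound[OF assms(2) cs e app f'L2 f'1])
    have S'm: "l1_op c f' \<in> borel_measurable lebesgue"
      using app[OF f'L2] S_meas[of "T f'" lebesgue "l1_op c f'"] by (simp add: L2_def)
    have Seq: "l1_op c f = (\<lambda>x. complex_of_real \<alpha> * l1_op c f' x)"
    proof
      fix x
      have "f = (\<lambda>x. complex_of_real \<alpha> * f' x)" unfolding f'_def using a1 by (auto simp: fun_eq_iff)
      then have "l1_op c f x = l1_op c (\<lambda>x. complex_of_real \<alpha> * f' x) x" by simp
      also have "\<dots> = complex_of_real \<alpha> * l1_op c f' x" by (rule l1_op_scale) (use a1 in simp)
      finally show "l1_op c f x = complex_of_real \<alpha> * l1_op c f' x" .
    qed
    have NS: "N2 (l1_op c f) \<le> ennreal (\<alpha>\<^sup>2 * (400 * e\<^sup>2))"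
    proof -
      have "N2 (l1_op c f) = ennreal (\<alpha>\<^sup>2) * N2 (l1_op c f')"
        unfolding Seq using N2_scale[OF S'm, of "complex_of_real \<alpha>"] a1 by simp
      also have "\<dots> \<le> ennreal (\<alpha>\<^sup>2) * ennreal (400 * e\<^sup>2)" using MB by (rule mult_left_mono) simp
      also have "\<dots> = ennreal (\<alpha>\<^sup>2 * (400 * e\<^sup>2))" by (simp add: ennreal_mult)
      finally show ?thesis .
    qed
    have Df: "(\<lambda>x. T f x - l1_op c f x) \<in> L2" and NDf: "N2 (\<lambda>x. T f x - l1_op c f x) \<le> ennreal (e\<^sup>2) * N2 f"
      using app[OF f] by auto
    have NDf': "N2 (\<lambda>x. T f x - l1_op c f x) \<le> ennreal (e\<^sup>2 * L\<^sup>2)"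
      using NDf unfolding Nf by (simp add: ennreal_mult)
    have Sm: "l1_op c f \<in> borel_measurable lebesgue"
      using Tf Df S_meas[of "T f" lebesgue "l1_op c f"] by (simp add: L2_def)
    have "T f = (\<lambda>x. (T f x - l1_op c f x) + l1_op c f x)" by simp
    then have "N2 (T f) \<le> 2 * N2 (\<lambda>x. T f x - l1_op c f x) + 2 * N2 (l1_op c f)"
      using N2_add[of "\<lambda>x. T f x - l1_op c f x" "l1_op c f"] Df Sm by (simp add: L2_def)
    also have "\<dots> \<le> ennreal (2 * (e\<^sup>2 * L\<^sup>2) + 2 * (\<alpha>\<^sup>2 * (400 * e\<^sup>2)))"
      by (rule comb2[OF NDf' NS]) auto
    also have "2 * (e\<^sup>2 * L\<^sup>2) + 2 * (\<alpha>\<^sup>2 * (400 * e\<^sup>2)) = K * e\<^sup>2"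
      unfolding K_def by (simp add: algebra_simps)
    finally show ?thesis .
  qed
  have N0: "N2 (T f) = 0" by (rule ennreal_small_zero[OF K0 bound])
  have Tfm: "T f \<in> borel_measurable lebesgue" using Tf by (simp add: L2_def)
  have "AE x in lebesgue. ennreal ((cmod (T f x))\<^sup>2) = 0"
    using N0 unfolding N2_def by (subst (asm) nn_integral_0_iff_AE) (use Tfm in measurable)
  then show "AE x in lebesgue. T f x = 0"
    by eventually_elim simp
qed

end
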